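(* Let $q\in(0,1]$. Consider the policy that directly follows the ex ante solution: whenever a task of type $s$ arrives at time $t$, it notifies each volunteer $v$ independently with probability $x^*_{v,s,t}$. On instances of the online volunteer notification problem whose inter-activity time distribution has minimum discrete hazard rate $q$, this policy achieves a competitive ratio of at most $q$; that is, for every $c>q$ there is such an instance $\mathcal{I}$ on which the policy's expected number of completed tasks is less than $c\,\mathbf{LP}_{\mathcal{I}}$.
   Context: Online volunteer notification problem. An instance $\mathcal{I}$ consists of volunteers $[V]$, task types $[S]$, horizon $T$, arrival probabilities $\lambda_{s,t}\ge0$ with $\sum_s\lambda_{s,t}\le1$, match probabilities $p_{v,s}\in[0,1]$, and a probability mass function $g$ on the positive integers with CDF $G(\tau)=\sum_{i\le\tau}g(i)$, $G(0)=0$. In each period $t$ at most one task arrives, of type $s$ with probability $\lambda_{s,t}$, independently across periods. All volunteers start active. Upon an arrival the platform notifies a subset of volunteers; each notified active volunteer $v$ responds positively independently with probability $p_{v,s}$; the task is completed iff at least one does. A volunteer active and notified at time $t$ becomes inactive (regardless of response) and active again at $t+Z$, $Z\sim g$ independent; inactive volunteers ignore notifications and are unaffected by them. MDHR: $q=\min_{\tau\in\mathbb{N}}\frac{g(\tau)}{1-G(\tau-1)}$ (with $\frac00:=1$). $\mathcal{P}$: set of $\mathbf{x}$ with $0\le x_{v,s,t}\le1$ and $\sum_{\tau=1}^t\sum_s\lambda_{s,\tau}x_{v,s,\tau}(1-G(t-\tau))\le1$ for all $v,t$; $\mathbf{LP}_{\mathcal{I}}=\max_{\mathbf{x}\in\mathcal{P}}\sum_{t,s}\lambda_{s,t}\min\{\sum_vx_{v,s,t}p_{v,s},1\}$.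 Ex ante solution: $f(\mathbf{x})=\sum_{t,s}\lambda_{s,t}(1-\prod_v(1-x_{v,s,t}p_{v,s}))$; $\mathbf{x}^*_{LP}$ optimal for $\mathbf{LP}_{\mathcal{I}}$; $\mathbf{x}^*_{AA}$ output of: $\mathbf{x}^0=\mathbf{0}$, for $i=1..m$ ($m\in\mathbb{N}$) $\mathbf{y}^i\in\arg\max_{\mathbf{x}\in\mathcal{P}}\langle\mathbf{x},\nabla f(\mathbf{x}^{i-1})\rangle$, $\mathbf{x}^i=\mathbf{x}^{i-1}+\mathbf{y}^i/m$, output $\mathbf{x}^m$; $\mathbf{x}^*_{SQ}$ built for $v=1..V$ in order, $(x^{SQ}_{v,s,t})_{s,t}$ optimal for $\max\sum_{t,s}\lambda_{s,t}\prod_{u<v}(1-p_{u,s}x^{SQ}_{u,s,t})p_{v,s}x_{v,s,t}$ s.t. $0\le x_{v,s,t}\le1$ and $\sum_{\tau\le t}\sum_s\lambda_{s,\tau}x_{v,s,\tau}(1-G(t-\tau))\le1$ for all $t$; $\mathbf{x}^*\in\arg\max_{\mathbf{x}\in\{\mathbf{x}^*_{LP},\mathbf{x}^*_{AA},\mathbf{x}^*_{SQ}\}}f(\mathbf{x})$. *)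

theory Defs
  imports "HOL-Probability.Probability" "HOL-Probability.Product_PMF"
begin

text \<open>Volunteers are 0..<V, task types 0..<S, periods 1..T.
  lam s t = arrival probability of type s at period t;
  p v s = match probability; g = inter-activity pmf on the positive integers
  (pmf g 0 = 0).\<close>

definition valid_instance ::
  "nat \<Rightarrow> nat \<Rightarrow> nat \<Rightarrow> (nat \<Rightarrow> nat \<Rightarrow> real) \<Rightarrow> (nat \<Rightarrow> nat \<Rightarrow> real) \<Rightarrow> nat pmf \<Rightarrow> bool" where
  "valid_instance V S T lam p g \<longleftrightarrow>
     (\<forall>s<S. \<forall>t\<in>{1..T}. 0 \<le> lam s t) \<and>
     (\<forall>t\<in>{1..T}. (\<Sum>s<S. lam s t) \<le> 1) \<and>
     (\<forall>v<V. \<forall>s<S. 0 \<le> p v s \<and> p v s \<le> 1) \<and>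
     pmf g 0 = 0"

definition cdfG :: "nat pmf \<Rightarrow> nat \<Rightarrow> real" where
  "cdfG g \<tau> = (\<Sum>i\<le>\<tau>. pmf g i)"

definition hazard :: "nat pmf \<Rightarrow> nat \<Rightarrow> real" where
  "hazard g \<tau> = (if 1 - cdfG g (\<tau> - 1) = 0 \<and> pmf g \<tau> = 0 then 1
                  else pmf g \<tau> / (1 - cdfG g (\<tau> - 1)))"

definition has_mdhr :: "nat pmf \<Rightarrow> real \<Rightarrow> bool" where
  "has_mdhr g q \<longleftrightarrow> (\<exists>\<tau>\<ge>1. hazard g \<tau> = q) \<and> (\<forall>\<tau>\<ge>1. q \<le> hazard g \<tau>)"

definition in_P ::
  "nat \<Rightarrow> nat \<Rightarrow> nat \<Rightarrow> (nat \<Rightarrow> nat \<Rightarrow> real) \<Rightarrow> nat pmf \<Rightarrow> (nat \<Rightarrow> nat \<Rightarrow> nat \<Rightarrow> real) \<Rightarrow> bool" where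
  "in_P V S T lam g x \<longleftrightarrow>
     (\<forall>v<V. \<forall>s<S. \<forall>t\<in>{1..T}. 0 \<le> x v s t \<and> x v s t \<le> 1) \<and>
     (\<forall>v<V. \<forall>t\<in>{1..T}.
        (\<Sum>\<tau>\<in>{1..t}. \<Sum>s<S. lam s \<tau> * x v s \<tau> * (1 - cdfG g (t - \<tau>))) \<le> 1)"

definition LP_obj ::
  "nat \<Rightarrow> nat \<Rightarrow> nat \<Rightarrow> (nat \<Rightarrow> nat \<Rightarrow> real) \<Rightarrow> (nat \<Rightarrow> nat \<Rightarrow> real) \<Rightarrow> (nat \<Rightarrow> nat \<Rightarrow> nat \<Rightarrow> real) \<Rightarrow> real" where
  "LP_obj V S T lam p x = (\<Sum>t\<in>{1..T}. \<Sum>s<S. lam s t * min (\<Sum>v<V. x v s t * p v s) 1)"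

text \<open>LP_I = max over P of the LP objective (the max exists; we write it as a Sup).\<close>
definition LP_value ::
  "nat \<Rightarrow> nat \<Rightarrow> nat \<Rightarrow> (nat \<Rightarrow> nat \<Rightarrow> real) \<Rightarrow> (nat \<Rightarrow> nat \<Rightarrow> real) \<Rightarrow> nat pmf \<Rightarrow> real" where
  "LP_value V S T lam p g = Sup (LP_obj V S T lam p ` {x. in_P V S T lam g x})"

definition is_LP_opt ::
  "nat \<Rightarrow> nat \<Rightarrow> nat \<Rightarrow> (nat \<Rightarrow> nat \<Rightarrow> real) \<Rightarrow> (nat \<Rightarrow> nat \<Rightarrow> real) \<Rightarrow> nat pmf \<Rightarrow> (nat \<Rightarrow> nat \<Rightarrow> nat \<Rightarrow> real) \<Rightarrow> bool" where
  "is_LP_opt V S T lam p g x \<longleftrightarrow> in_P V S T lam g x \<and>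
     (\<forall>y. in_P V S T lam g y \<longrightarrow> LP_obj V S T lam p y \<le> LP_obj V S T lam p x)"

definition f_obj ::
  "nat \<Rightarrow> nat \<Rightarrow> nat \<Rightarrow> (nat \<Rightarrow> nat \<Rightarrow> real) \<Rightarrow> (nat \<Rightarrow> nat \<Rightarrow> real) \<Rightarrow> (nat \<Rightarrow> nat \<Rightarrow> nat \<Rightarrow> real) \<Rightarrow> real" where
  "f_obj V S T lam p x = (\<Sum>t\<in>{1..T}. \<Sum>s<S. lam s t * (1 - (\<Prod>v<V. 1 - x v s t * p v s)))"

text \<open>Gradient of f: partial derivative w.r.t. x_{v,s,t}.\<close>
definition grad_f ::
  "nat \<Rightarrow> (nat \<Rightarrow> nat \<Rightarrow> real) \<Rightarrow> (nat \<Rightarrow> nat \<Rightarrow> real) \<Rightarrow> (nat \<Rightarrow> nat \<Rightarrow> nat \<Rightarrow> real) \<Rightarrow> nat \<Rightarrow> nat \<Rightarrow> nat \<Rightarrow> real" where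
  "grad_f V lam p x v s t = lam s t * p v s * (\<Prod>u\<in>{..<V} - {v}. 1 - x u s t * p u s)"

definition inner_sol ::
  "nat \<Rightarrow> nat \<Rightarrow> nat \<Rightarrow> (nat \<Rightarrow> nat \<Rightarrow> nat \<Rightarrow> real) \<Rightarrow> (nat \<Rightarrow> nat \<Rightarrow> nat \<Rightarrow> real) \<Rightarrow> real" where
  "inner_sol V S T a b = (\<Sum>v<V. \<Sum>s<S. \<Sum>t\<in>{1..T}. a v s t * b v s t)"

text \<open>x is a possible output of the continuous-greedy procedure (for some m \<ge> 1
  and some choice of the argmax points).\<close>
definition is_AA_output ::
  "nat \<Rightarrow> nat \<Rightarrow> nat \<Rightarrow> (nat \<Rightarrow> nat \<Rightarrow> real) \<Rightarrow> (nat \<Rightarrow> nat \<Rightarrow> real) \<Rightarrow> nat pmf \<Rightarrow> (nat \<Rightarrow> nat \<Rightarrow> nat \<Rightarrow> real) \<Rightarrow> bool" where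
  "is_AA_output V S T lam p g x \<longleftrightarrow>
     (\<exists>m::nat. m \<ge> 1 \<and>
       (\<exists>xs ys :: nat \<Rightarrow> nat \<Rightarrow> nat \<Rightarrow> nat \<Rightarrow> real.
          xs 0 = (\<lambda>v s t. 0) \<and>
          (\<forall>i\<in>{1..m}.
             in_P V S T lam g (ys i) \<and>
             (\<forall>y. in_P V S T lam g y \<longrightarrow>
                inner_sol V S T y (grad_f V lam p (xs (i - 1)))
                  \<le> inner_sol V S T (ys i) (grad_f V lam p (xs (i - 1)))) \<and>
             xs i = (\<lambda>v s t. xs (i - 1) v s t + ys i v s t / real m)) \<and>
          x = xs m))"

definition single_feasible ::
  "nat \<Rightarrow> nat \<Rightarrow> (nat \<Rightarrow> nat \<Rightarrow> real) \<Rightarrow> nat pmf \<Rightarrow> (nat \<Rightarrow> nat \<Rightarrow> real) \<Rightarrow> bool" where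
  "single_feasible S T lam g y \<longleftrightarrow>
     (\<forall>s<S. \<forall>t\<in>{1..T}. 0 \<le> y s t \<and> y s t \<le> 1) \<and>
     (\<forall>t\<in>{1..T}. (\<Sum>\<tau>\<in>{1..t}. \<Sum>s<S. lam s \<tau> * y s \<tau> * (1 - cdfG g (t - \<tau>))) \<le> 1)"

definition SQ_obj ::
  "nat \<Rightarrow> nat \<Rightarrow> (nat \<Rightarrow> nat \<Rightarrow> real) \<Rightarrow> (nat \<Rightarrow> nat \<Rightarrow> real) \<Rightarrow> (nat \<Rightarrow> nat \<Rightarrow> nat \<Rightarrow> real) \<Rightarrow> nat \<Rightarrow> (nat \<Rightarrow> nat \<Rightarrow> real) \<Rightarrow> real" where
  "SQ_obj S T lam p x v y =
     (\<Sum>t\<in>{1..T}. \<Sum>s<S. lam s t * (\<Prod>u<v. 1 - p u s * x u s t) * p v s * y s t)"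

text \<open>x is a possible output of the sequential procedure: each row x v is optimal
  for its problem given the rows x u, u < v.\<close>
definition is_SQ_output ::
  "nat \<Rightarrow> nat \<Rightarrow> nat \<Rightarrow> (nat \<Rightarrow> nat \<Rightarrow> real) \<Rightarrow> (nat \<Rightarrow> nat \<Rightarrow> real) \<Rightarrow> nat pmf \<Rightarrow> (nat \<Rightarrow> nat \<Rightarrow> nat \<Rightarrow> real) \<Rightarrow> bool" where
  "is_SQ_output V S T lam p g x \<longleftrightarrow>
     (\<forall>v<V. single_feasible S T lam g (x v) \<and>
        (\<forall>y. single_feasible S T lam g y \<longrightarrow> SQ_obj S T lam p x v y \<le> SQ_obj S T lam p x v (x v)))"

text \<open>x is an ex ante solution x*: the f-best among some x_LP, x_AA, x_SQ.\<close>
definition is_ex_ante ::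
  "nat \<Rightarrow> nat \<Rightarrow> nat \<Rightarrow> (nat \<Rightarrow> nat \<Rightarrow> real) \<Rightarrow> (nat \<Rightarrow> nat \<Rightarrow> real) \<Rightarrow> nat pmf \<Rightarrow> (nat \<Rightarrow> nat \<Rightarrow> nat \<Rightarrow> real) \<Rightarrow> bool" where
  "is_ex_ante V S T lam p g x \<longleftrightarrow>
     (\<exists>a b c. is_LP_opt V S T lam p g a \<and> is_AA_output V S T lam p g b \<and> is_SQ_output V S T lam p g c \<and>
        x \<in> {a, b, c} \<and>
        f_obj V S T lam p a \<le> f_obj V S T lam p x \<and>
        f_obj V S T lam p b \<le> f_obj V S T lam p x \<and>
        f_obj V S T lam p c \<le> f_obj V S T lam p x)"

text \<open>Stochastic model. A state r : volunteer \<Rightarrow> nat gives the period from which the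
  volunteer is active: v is active in period t iff r v \<le> t. Initially r = 0.\<close>

definition arrival_pmf :: "nat \<Rightarrow> (nat \<Rightarrow> nat \<Rightarrow> real) \<Rightarrow> nat \<Rightarrow> nat option pmf" where
  "arrival_pmf S lam t = embed_pmf (\<lambda>a. case a of
       None \<Rightarrow> 1 - (\<Sum>s<S. lam s t)
     | Some s \<Rightarrow> (if s < S then lam s t else 0))"

text \<open>One period t under the policy that notifies v independently with probability
  x v s t. Result: (task completed?, new state).\<close>
definition step_pmf ::
  "nat \<Rightarrow> nat \<Rightarrow> (nat \<Rightarrow> nat \<Rightarrow> real) \<Rightarrow> (nat \<Rightarrow> nat \<Rightarrow> real) \<Rightarrow> nat pmf \<Rightarrow> (nat \<Rightarrow> nat \<Rightarrow> nat \<Rightarrow> real)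
     \<Rightarrow> nat \<Rightarrow> (nat \<Rightarrow> nat) \<Rightarrow> (bool \<times> (nat \<Rightarrow> nat)) pmf" where
  "step_pmf V S lam p g x t r =
     bind_pmf (arrival_pmf S lam t) (\<lambda>a. case a of
       None \<Rightarrow> return_pmf (False, r)
     | Some s \<Rightarrow>
         bind_pmf (Pi_pmf {..<V} (False, False, 0)
                     (\<lambda>v. pair_pmf (bernoulli_pmf (x v s t)) (pair_pmf (bernoulli_pmf (p v s)) g)))
           (\<lambda>d. let A = {v. v < V \<and> fst (d v) \<and> r v \<le> t} in
                 return_pmf ((\<exists>v\<in>A. fst (snd (d v))),
                             (\<lambda>v. if v \<in> A then t + snd (snd (d v)) else r v))))"

primrec state_dist ::
  "nat \<Rightarrow> nat \<Rightarrow> (nat \<Rightarrow> nat \<Rightarrow> real) \<Rightarrow> (nat \<Rightarrow> nat \<Rightarrow> real) \<Rightarrow> nat pmf \<Rightarrow> (nat \<Rightarrow> nat \<Rightarrow> nat \<Rightarrow> real)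
     \<Rightarrow> nat \<Rightarrow> (nat \<Rightarrow> nat) pmf" where
  "state_dist V S lam p g x 0 = return_pmf (\<lambda>v. 0)"
| "state_dist V S lam p g x (Suc n) =
     bind_pmf (state_dist V S lam p g x n) (\<lambda>r. map_pmf snd (step_pmf V S lam p g x (Suc n) r))"

definition policy_reward ::
  "nat \<Rightarrow> nat \<Rightarrow> nat \<Rightarrow> (nat \<Rightarrow> nat \<Rightarrow> real) \<Rightarrow> (nat \<Rightarrow> nat \<Rightarrow> real) \<Rightarrow> nat pmf \<Rightarrow> (nat \<Rightarrow> nat \<Rightarrow> nat \<Rightarrow> real) \<Rightarrow> real" where
  "policy_reward V S T lam p g x =
     (\<Sum>t\<in>{1..T}. measure_pmf.prob
        (bind_pmf (state_dist V S lam p g x (t - 1)) (step_pmf V S lam p g x t)) {c. fst c})"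

end

theory Submission
  imports Defs
begin


definition gq :: "real \<Rightarrow> nat pmf" where
  "gq q = map_pmf (\<lambda>b. if b then 1 else 2) (bernoulli_pmf q)"

lemma pmf_gq:
  assumes "0 \<le> q" "q \<le> 1"
  shows "pmf (gq q) k = (if k = 1 then q else if k = 2 then 1 - q else 0)"
proof -
  have "pmf (gq q) k = measure_pmf.prob (bernoulli_pmf q) ((\<lambda>b. if b then 1 else 2) -` {k})"
    unfolding gq_def pmf_map ..
  moreover have "(\<lambda>b. if b then 1 else 2::nat) -` {k} = (if k = 1 then {True} else if k = 2 then {False} else {})"
  proof (cases "k = 1")
    case True then show ?thesis by (auto simp: vimage_def split: if_split_asm)
  next
    case False
    then show ?thesis by (cases "k = 2") (auto simp: vimage_def split: if_split_asm)
  qed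
  ultimately show ?thesis using assms by (simp add: measure_pmf_single)
qed

lemma bern1: "bernoulli_pmf 1 = return_pmf True"
  by (rule pmf_eqI) (auto simp: indicator_def)

lemma cdf_gq0: "0 \<le> q \<Longrightarrow> q \<le> 1 \<Longrightarrow> cdfG (gq q) 0 = 0"
  by (simp add: cdfG_def pmf_gq)
lemma cdf_gq1: "0 \<le> q \<Longrightarrow> q \<le> 1 \<Longrightarrow> cdfG (gq q) 1 = q"
  by (simp add: cdfG_def pmf_gq)
lemma cdf_gq2: assumes "0 \<le> q" "q \<le> 1" "2 \<le> k" shows "cdfG (gq q) k = 1"
  using assms(3)
proof (induction k rule: dec_induct)
  case base
  then show ?case using assms by (simp add: cdfG_def pmf_gq numeral_2_eq_2)
next
  case (step n)
  then show ?case using assms by (simp add: cdfG_def pmf_gq)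
qed

lemma mdhr_gq: assumes "0 < q" "q \<le> 1" shows "has_mdhr (gq q) q"
  unfolding has_mdhr_def
proof (intro conjI)
  show "\<exists>\<tau>\<ge>1. hazard (gq q) \<tau> = q"
    by (rule exI[of _ 1]) (use assms in \<open>simp add: hazard_def cdf_gq0 pmf_gq\<close>)
  show "\<forall>\<tau>\<ge>1. q \<le> hazard (gq q) \<tau>"
  proof (intro allI impI)
    fix \<tau> :: nat assume "1 \<le> \<tau>"
    then consider "\<tau> = 1" | "\<tau> = 2" | "3 \<le> \<tau>" by linarith
    then show "q \<le> hazard (gq q) \<tau>"
    proof cases
      case 1 then show ?thesis using assms by (simp add: hazard_def cdf_gq0 pmf_gq)
    next
      case 2
      have c: "cdfG (gq q) (\<tau> - 1) = q" using 2 assms cdf_gq1 by simp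
      have pm: "pmf (gq q) \<tau> = 1 - q" using 2 assms by (simp add: pmf_gq)
      show ?thesis
      proof (cases "q = 1")
        case True
        have "hazard (gq q) \<tau> = 1" unfolding hazard_def c pm using True by simp
        then show ?thesis using assms by simp
      next
        case False
        have "hazard (gq q) \<tau> = 1" unfolding hazard_def c pm using False by simp
        then show ?thesis using assms by simp
      qed
    next
      case 3
      then have "cdfG (gq q) (\<tau> - 1) = 1" using assms by (intro cdf_gq2) auto
      then show ?thesis using assms 3 by (simp add: hazard_def pmf_gq)
    qed
  qed
qed



lemma pmf_arrival:
  assumes "\<And>s. s < S \<Longrightarrow> 0 \<le> lam s t" "(\<Sum>s<S. lam s t) \<le> 1"
  shows "pmf (arrival_pmf S lam t) a = (case a of None \<Rightarrow> 1 - (\<Sum>s<S. lam s t)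
        | Some s \<Rightarrow> (if s < S then lam s t else 0))"
  unfolding arrival_pmf_def
proof (rule pmf_embed_pmf)
  let ?f = "\<lambda>a. case a of None \<Rightarrow> 1 - (\<Sum>s<S. lam s t) | Some s \<Rightarrow> (if s < S then lam s t else 0)"
  show "\<And>x. 0 \<le> ?f x" using assms by (auto split: option.splits)
  have "(\<integral>\<^sup>+x. ennreal (?f x) \<partial>count_space UNIV) = (\<Sum>x\<in>insert None (Some ` {..<S}). ennreal (?f x))"
    by (rule nn_integral_count_space') (auto split: option.splits)
  also have "\<dots> = ennreal (\<Sum>x\<in>insert None (Some ` {..<S}). ?f x)"
    using assms by (intro sum_ennreal) (auto split: option.splits)
  also have "(\<Sum>x\<in>insert None (Some ` {..<S}). ?f x) = 1"
    by (subst sum.insert) (auto simp: sum.reindex)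
  finally show "(\<integral>\<^sup>+x. ennreal (?f x) \<partial>count_space UNIV) = 1" by simp
qed

lemma step_V1:
  "step_pmf (Suc 0) S lam p g x t r = bind_pmf (arrival_pmf S lam t) (\<lambda>a. case a of
       None \<Rightarrow> return_pmf (False, r)
     | Some s \<Rightarrow> map_pmf (\<lambda>(n, b, z). (n \<and> r 0 \<le> t \<and> b, \<lambda>v. if v = 0 \<and> n \<and> r 0 \<le> t then t + z else r v))
          (pair_pmf (bernoulli_pmf (x 0 s t)) (pair_pmf (bernoulli_pmf (p 0 s)) g)))"
  unfolding step_pmf_def
proof (intro bind_pmf_cong refl)
  fix a :: "nat option"
  show "(case a of None \<Rightarrow> return_pmf (False, r)
     | Some s \<Rightarrow>
         bind_pmf (Pi_pmf {..<Suc 0} (False, False, 0)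
                     (\<lambda>v. pair_pmf (bernoulli_pmf (x v s t)) (pair_pmf (bernoulli_pmf (p v s)) g)))
           (\<lambda>d. let A = {v. v < Suc 0 \<and> fst (d v) \<and> r v \<le> t} in
                 return_pmf ((\<exists>v\<in>A. fst (snd (d v))),
                             (\<lambda>v. if v \<in> A then t + snd (snd (d v)) else r v)))) =
    (case a of None \<Rightarrow> return_pmf (False, r)
     | Some s \<Rightarrow> map_pmf (\<lambda>(n, b, z). (n \<and> r 0 \<le> t \<and> b, \<lambda>v. if v = 0 \<and> n \<and> r 0 \<le> t then t + z else r v))
          (pair_pmf (bernoulli_pmf (x 0 s t)) (pair_pmf (bernoulli_pmf (p 0 s)) g)))"
  proof (cases a)
    case None then show ?thesis by simp
  next
    case (Some s)
    let ?F = "\<lambda>(n, b, z). (n \<and> r 0 \<le> t \<and> b, \<lambda>v. if v = 0 \<and> n \<and> r 0 \<le> t then t + z else r (v::nat))"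
    let ?P = "Pi_pmf {..<Suc 0} (False, False, 0)
                     (\<lambda>v. pair_pmf (bernoulli_pmf (x v s t)) (pair_pmf (bernoulli_pmf (p v s)) g))"
    have "bind_pmf ?P (\<lambda>d. let A = {v. v < Suc 0 \<and> fst (d v) \<and> r v \<le> t} in
                 return_pmf ((\<exists>v\<in>A. fst (snd (d v))),
                             (\<lambda>v. if v \<in> A then t + snd (snd (d v)) else r v)))
          = bind_pmf ?P (\<lambda>d. return_pmf (?F (d 0)))"
    proof (intro bind_pmf_cong refl)
      fix d :: "nat \<Rightarrow> bool \<times> bool \<times> nat"
      obtain n b z where d0: "d 0 = (n, b, z)" by (metis prod.exhaust)
      have A: "{v. v < Suc 0 \<and> fst (d v) \<and> r v \<le> t} = (if n \<and> r 0 \<le> t then {0} else {})"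
        using d0 by auto
      show "(let A = {v. v < Suc 0 \<and> fst (d v) \<and> r v \<le> t} in
                 return_pmf ((\<exists>v\<in>A. fst (snd (d v))),
                             (\<lambda>v. if v \<in> A then t + snd (snd (d v)) else r v))) = return_pmf (?F (d 0))"
        unfolding Let_def A using d0 by (auto intro!: ext)
    qed
    also have "\<dots> = map_pmf ?F (map_pmf (\<lambda>d. d 0) ?P)"
      by (simp add: map_pmf_def bind_assoc_pmf bind_return_pmf)
    also have "map_pmf (\<lambda>d. d 0) ?P = pair_pmf (bernoulli_pmf (x 0 s t)) (pair_pmf (bernoulli_pmf (p 0 s)) g)"
      by (subst Pi_pmf_component) auto
    finally show ?thesis using Some by simp
  qed
qed



definition lamI :: "real \<Rightarrow> nat \<Rightarrow> nat \<Rightarrow> real" where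
  "lamI q s t = (if s = 0 \<and> t = 1 then 1 else if s = 1 \<and> t = 2 then q else 0)"
definition pI :: "real \<Rightarrow> nat \<Rightarrow> nat \<Rightarrow> real" where
  "pI d v s = (if s = 0 then d else 1)"

lemma lessThan2: "{..<2::nat} = {0, 1}" by auto

lemma arrival1: "arrival_pmf 2 (lamI q) 1 = return_pmf (Some 0)"
proof (rule pmf_eqI)
  fix a
  have "pmf (arrival_pmf 2 (lamI q) 1) a = (case a of None \<Rightarrow> 1 - (\<Sum>s<2. lamI q s 1)
        | Some s \<Rightarrow> (if s < 2 then lamI q s 1 else 0))"
    by (rule pmf_arrival) (auto simp: lamI_def lessThan2)
  then show "pmf (arrival_pmf 2 (lamI q) 1) a = pmf (return_pmf (Some 0)) a"
    by (auto simp: lamI_def lessThan2 indicator_def split: option.splits)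
qed

lemma arrival2: assumes "0 \<le> q" "q \<le> 1"
  shows "pmf (arrival_pmf 2 (lamI q) 2) a = (if a = None then 1 - q else if a = Some 1 then q else 0)"
proof -
  have "pmf (arrival_pmf 2 (lamI q) 2) a = (case a of None \<Rightarrow> 1 - (\<Sum>s<2. lamI q s 2)
        | Some s \<Rightarrow> (if s < 2 then lamI q s 2 else 0))"
    by (rule pmf_arrival) (use assms in \<open>auto simp: lamI_def lessThan2\<close>)
  then show ?thesis
    by (auto simp: lamI_def lessThan2 split: option.splits)
qed

lemma prob_fst: "measure_pmf.prob M {c. fst c} = pmf (map_pmf fst M) True"
  by (simp add: pmf_map vimage_def)

lemma reward1:
  assumes "0 \<le> d" "d \<le> 1" "x 0 0 1 = 1"
  shows "map_pmf fst (step_pmf (Suc 0) 2 (lamI q) (pI d) g x 1 (\<lambda>v. 0)) = bernoulli_pmf d"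
proof -
  have "map_pmf fst (step_pmf (Suc 0) 2 (lamI q) (pI d) g x 1 (\<lambda>v. 0)) =
     map_pmf fst (pair_pmf (bernoulli_pmf d) g)"
    unfolding step_V1 arrival1 bind_return_pmf
    using assms by (simp add: map_pmf_comp pair_return_pmf1 bern1 pI_def case_prod_beta)
  then show ?thesis by (simp add: map_fst_pair_pmf)
qed

lemma state1:
  assumes "x 0 0 1 = 1"
  shows "state_dist (Suc 0) 2 (lamI q) (pI d) g x 1 = map_pmf (\<lambda>z v. if v = 0 then 1 + z else 0) g"
proof -
  have "state_dist (Suc 0) 2 (lamI q) (pI d) g x 1 = map_pmf snd (step_pmf (Suc 0) 2 (lamI q) (pI d) g x 1 (\<lambda>v. 0))"
    by (simp add: bind_return_pmf)
  also have "\<dots> = map_pmf (\<lambda>z v. if v = 0 then 1 + z else 0) (map_pmf snd (pair_pmf (bernoulli_pmf (pI d 0 0)) g))"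
    unfolding step_V1 arrival1 bind_return_pmf
    using assms by (simp add: map_pmf_comp pair_return_pmf1 bern1 case_prod_beta)
  finally show ?thesis by (simp add: map_snd_pair_pmf)
qed



lemma step2_late:
  assumes "r 0 = 3"
  shows "map_pmf fst (step_pmf (Suc 0) 2 (lamI q) (pI d) g x 2 r) = return_pmf False"
proof -
  have "map_pmf fst (step_pmf (Suc 0) 2 (lamI q) (pI d) g x 2 r) =
        bind_pmf (arrival_pmf 2 (lamI q) 2) (\<lambda>a. return_pmf False)"
    unfolding step_V1 map_bind_pmf
    by (intro bind_pmf_cong refl) (use assms in \<open>auto simp: map_pmf_comp case_prod_beta split: option.splits\<close>)
  then show ?thesis by simp
qed

lemma step2_early:
  assumes "r 0 = 2" "x 0 1 2 = 1" "0 \<le> q" "q \<le> 1"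
  shows "pmf (map_pmf fst (step_pmf (Suc 0) 2 (lamI q) (pI d) g x 2 r)) True = q"
proof -
  let ?f = "\<lambda>a. pmf (map_pmf fst (case a of None \<Rightarrow> return_pmf (False, r)
     | Some s \<Rightarrow> map_pmf (\<lambda>(n, b, z). (n \<and> r 0 \<le> 2 \<and> b, \<lambda>v. if v = 0 \<and> n \<and> r 0 \<le> 2 then 2 + z else r v))
          (pair_pmf (bernoulli_pmf (x 0 s 2)) (pair_pmf (bernoulli_pmf (pI d 0 s)) g)))) True"
  have "pmf (map_pmf fst (step_pmf (Suc 0) 2 (lamI q) (pI d) g x 2 r)) True =
     (\<integral>a. ?f a \<partial>measure_pmf (arrival_pmf 2 (lamI q) 2))"
    unfolding step_V1 map_bind_pmf pmf_bind ..
  also have "\<dots> = (\<Sum>a\<in>{None, Some 1}. ?f a * pmf (arrival_pmf 2 (lamI q) 2) a)"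
    by (rule integral_measure_pmf_real) (use assms in \<open>auto simp: set_pmf_iff arrival2 split: if_splits\<close>)
  also have "\<dots> = q"
    using assms by (simp add: arrival2 pI_def bern1 pair_return_pmf1 map_pmf_comp case_prod_beta)
  finally show ?thesis .
qed

lemma sum12: "(\<Sum>z\<in>{1::nat,2}. f z) = f 1 + f 2" by simp

lemma reward2:
  assumes "x 0 0 1 = 1" "x 0 1 2 = 1" "0 \<le> q" "q \<le> 1"
  shows "pmf (map_pmf fst (bind_pmf (state_dist (Suc 0) 2 (lamI q) (pI d) (gq q) x 1)
            (step_pmf (Suc 0) 2 (lamI q) (pI d) (gq q) x 2))) True = q * q"
proof -
  let ?K = "\<lambda>z v. if v = 0 then 1 + z else (0::nat)"
  let ?h = "\<lambda>z. pmf (map_pmf fst (step_pmf (Suc 0) 2 (lamI q) (pI d) (gq q) x 2 (?K z))) True"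
  have "pmf (map_pmf fst (bind_pmf (state_dist (Suc 0) 2 (lamI q) (pI d) (gq q) x 1)
            (step_pmf (Suc 0) 2 (lamI q) (pI d) (gq q) x 2))) True = (\<integral>z. ?h z \<partial>measure_pmf (gq q))"
    unfolding state1[of x, OF assms(1)] bind_map_pmf map_bind_pmf pmf_bind by simp
  also have "\<dots> = (\<Sum>z\<in>{1,2}. ?h z * pmf (gq q) z)"
    by (rule integral_measure_pmf_real) (use assms in \<open>auto simp: set_pmf_iff pmf_gq split: if_splits\<close>)
  also have "\<dots> = ?h 1 * q + ?h 2 * (1 - q)"
  proof -
    have "pmf (gq q) 1 = q" "pmf (gq q) 2 = 1 - q" using assms by (simp_all add: pmf_gq)
    then show ?thesis unfolding sum12 by simp
  qed
  also have "?h 1 = q"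
    by (rule step2_early) (use assms in auto)
  also have "?h 2 = 0"
    by (subst step2_late) auto
  finally show ?thesis by simp
qed

lemma reward_total:
  assumes "x 0 0 1 = 1" "x 0 1 2 = 1" "0 \<le> q" "q \<le> 1" "0 \<le> d" "d \<le> 1"
  shows "policy_reward (Suc 0) 2 2 (lamI q) (pI d) (gq q) x = d + q * q"
proof -
  let ?R = "\<lambda>t. measure_pmf.prob
        (bind_pmf (state_dist (Suc 0) 2 (lamI q) (pI d) (gq q) x (t - 1)) (step_pmf (Suc 0) 2 (lamI q) (pI d) (gq q) x t)) {c. fst c}"
  have e: "{1..2::nat} = {1, 2}" by auto
  have r1: "?R 1 = d"
    unfolding prob_fst diff_self_eq_0 state_dist.simps(1) bind_return_pmf reward1[of d x, OF assms(5,6,1)]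
    using assms by simp
  have r2: "?R 2 = q * q"
    unfolding prob_fst using reward2[of x q d, OF assms(1-4)] by (simp add: numeral_2_eq_2)
  have "policy_reward (Suc 0) 2 2 (lamI q) (pI d) (gq q) x = ?R 1 + ?R 2"
    unfolding policy_reward_def e sum12 by (rule refl)
  then show ?thesis using r1 r2 by simp
qed



lemma cdf_gq1': "0 \<le> q \<Longrightarrow> q \<le> 1 \<Longrightarrow> cdfG (gq q) (Suc 0) = q"
  using cdf_gq1 by simp

lemma all2: "(\<forall>s<2. Q s) \<longleftrightarrow> Q 0 \<and> Q (1::nat)"
proof
  assume "\<forall>s<2. Q s" then show "Q 0 \<and> Q 1" by simp
next
  assume h: "Q 0 \<and> Q 1"
  show "\<forall>s<2. Q s"
  proof (intro allI impI)
    fix s :: nat assume "s < 2" then have "s = 0 \<or> s = 1" by arith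
    then show "Q s" using h by blast
  qed
qed

lemma box_iff: "(\<forall>s<(2::nat). \<forall>t\<in>{1..2::nat}. P s t) \<longleftrightarrow> P 0 1 \<and> P 0 2 \<and> P 1 1 \<and> P 1 2"
proof -
  have e: "{1..2::nat} = {1,2}" by auto
  show ?thesis unfolding all2 e by blast
qed

lemma constr_ok:
  fixes a b q :: real
  assumes q: "0 < q" "q \<le> 1" and b: "0 \<le> a" "a \<le> 1" "0 \<le> b" "b \<le> 1"
  shows "a * (1 - q) + q * b \<le> 1"
proof -
  have "a * (1 - q) \<le> 1 * (1 - q)" using b q by (intro mult_right_mono) auto
  moreover have "q * b \<le> q * 1" using b q by (intro mult_left_mono) auto
  ultimately show ?thesis by simp
qed

lemma constr_sum:
  assumes q: "0 < q" "q \<le> 1" and t: "t \<in> {1..2::nat}"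
    and b: "0 \<le> y 0 1" "y 0 1 \<le> 1" "0 \<le> y 1 2" "y 1 2 \<le> 1"
  shows "(\<Sum>\<tau>\<in>{1..t}. \<Sum>s<2. lamI q s \<tau> * y s \<tau> * (1 - cdfG (gq q) (t - \<tau>))) \<le> 1"
proof -
  have "t = 1 \<or> t = 2" using t by auto
  then show ?thesis
  proof
    assume "t = 1"
    then show ?thesis using q b by (simp add: lessThan2 lamI_def cdf_gq0)
  next
    assume t2: "t = 2"
    have e: "{1..2::nat} = {1,2}" by auto
    have "(\<Sum>\<tau>\<in>{1..t}. \<Sum>s<2. lamI q s \<tau> * y s \<tau> * (1 - cdfG (gq q) (t - \<tau>))) = y 0 1 * (1 - q) + q * y 1 2"
      unfolding t2 e sum12 using q by (simp add: lessThan2 lamI_def cdf_gq0 cdf_gq1')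
    then show ?thesis using constr_ok[OF q b] by simp
  qed
qed

lemma inP_iff:
  assumes "0 < q" "q \<le> 1"
  shows "in_P (Suc 0) 2 2 (lamI q) (gq q) x \<longleftrightarrow> (\<forall>s<2. \<forall>t\<in>{1..2}. 0 \<le> x 0 s t \<and> x 0 s t \<le> 1)"
proof
  assume "in_P (Suc 0) 2 2 (lamI q) (gq q) x" then show "\<forall>s<2. \<forall>t\<in>{1..2}. 0 \<le> x 0 s t \<and> x 0 s t \<le> 1"
    unfolding in_P_def by blast
next
  assume h: "\<forall>s<2. \<forall>t\<in>{1..2}. 0 \<le> x 0 s t \<and> x 0 s t \<le> 1"
  then have b: "0 \<le> x 0 0 1" "x 0 0 1 \<le> 1" "0 \<le> x 0 1 2" "x 0 1 2 \<le> 1" unfolding box_iff by auto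
  show "in_P (Suc 0) 2 2 (lamI q) (gq q) x"
    unfolding in_P_def using h constr_sum[OF assms _ b] by auto
qed

lemma sf_iff:
  assumes "0 < q" "q \<le> 1"
  shows "single_feasible 2 2 (lamI q) (gq q) y \<longleftrightarrow> (\<forall>s<2. \<forall>t\<in>{1..2}. 0 \<le> y s t \<and> y s t \<le> 1)"
proof
  assume "single_feasible 2 2 (lamI q) (gq q) y" then show "\<forall>s<2. \<forall>t\<in>{1..2}. 0 \<le> y s t \<and> y s t \<le> 1"
    unfolding single_feasible_def by blast
next
  assume h: "\<forall>s<2. \<forall>t\<in>{1..2}. 0 \<le> y s t \<and> y s t \<le> 1"
  then have b: "0 \<le> y 0 1" "y 0 1 \<le> 1" "0 \<le> y 1 2" "y 1 2 \<le> 1" unfolding box_iff by auto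
  show "single_feasible 2 2 (lamI q) (gq q) y"
    unfolding single_feasible_def using h constr_sum[OF assms _ b] by auto
qed

lemma LP_obj_eq: "LP_obj (Suc 0) 2 2 (lamI q) (pI d) x = min (x 0 0 1 * d) 1 + q * min (x 0 1 2) 1"
proof -
  have e: "{1..2::nat} = {1,2}" by auto
  show ?thesis unfolding LP_obj_def e sum12 by (simp add: lessThan2 lamI_def pI_def)
qed

lemma SQ_obj_eq: "SQ_obj 2 2 (lamI q) (pI d) x 0 y = d * y 0 1 + q * y 1 2"
proof -
  have e: "{1..2::nat} = {1,2}" by auto
  show ?thesis unfolding SQ_obj_def e sum12 by (simp add: lessThan2 lamI_def pI_def)
qed

lemma inner_eq: "inner_sol (Suc 0) 2 2 y (grad_f (Suc 0) (lamI q) (pI d) z) = d * y 0 0 1 + q * y 0 1 2"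
proof -
  have e: "{1..2::nat} = {1,2}" by auto
  have e2: "{..<Suc 0} - {0} = {}" by auto
  show ?thesis unfolding inner_sol_def grad_f_def e sum12 by (simp add: lessThan2 lamI_def pI_def e2)
qed

lemma force_one:
  fixes a b q d :: real
  assumes "0 < d" "0 < q" "a \<le> 1" "b \<le> 1" "d + q \<le> d * a + q * b"
  shows "a = 1 \<and> b = 1"
proof -
  have "0 \<le> d * (1 - a)" "0 \<le> q * (1 - b)" using assms by auto
  moreover have "d * (1 - a) + q * (1 - b) \<le> 0" using assms(5) by (simp add: algebra_simps)
  ultimately have "d * (1 - a) = 0" "q * (1 - b) = 0" by linarith+
  then show ?thesis using assms by auto
qed



definition oneX :: "nat \<Rightarrow> nat \<Rightarrow> nat \<Rightarrow> real" where "oneX v s t = 1"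

lemma oneX_inP: "0 < q \<Longrightarrow> q \<le> 1 \<Longrightarrow> in_P (Suc 0) 2 2 (lamI q) (gq q) oneX"
  by (simp add: inP_iff oneX_def)

lemma inP_le:
  assumes "0 < q" "q \<le> 1" "in_P (Suc 0) 2 2 (lamI q) (gq q) y"
  shows "0 \<le> y 0 0 1 \<and> y 0 0 1 \<le> 1 \<and> 0 \<le> y 0 1 2 \<and> y 0 1 2 \<le> 1"
  using assms(3) unfolding inP_iff[OF assms(1,2)] box_iff by auto

lemma LP_opt_forced:
  assumes "0 < q" "q \<le> 1" "0 < d" "is_LP_opt (Suc 0) 2 2 (lamI q) (pI d) (gq q) a" "d \<le> 1"
  shows "a 0 0 1 = 1 \<and> a 0 1 2 = 1"
proof -
  have inp: "in_P (Suc 0) 2 2 (lamI q) (gq q) a" and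
    le: "LP_obj (Suc 0) 2 2 (lamI q) (pI d) oneX \<le> LP_obj (Suc 0) 2 2 (lamI q) (pI d) a"
    using assms(4) oneX_inP[OF assms(1,2)] unfolding is_LP_opt_def by auto
  have b: "0 \<le> a 0 0 1 \<and> a 0 0 1 \<le> 1 \<and> 0 \<le> a 0 1 2 \<and> a 0 1 2 \<le> 1" using inP_le[OF assms(1,2) inp] .
  have l: "min (1 * d) 1 + q * min 1 1 \<le> min (a 0 0 1 * d) 1 + q * min (a 0 1 2) 1"
    using le unfolding LP_obj_eq oneX_def .
  have m1: "min (a 0 0 1 * d) 1 \<le> a 0 0 1 * d" by simp
  have m2: "q * min (a 0 1 2) 1 \<le> q * a 0 1 2" using assms(1) by (intro mult_left_mono) auto
  have m3: "min (1 * d) 1 = d" using assms(5) by simp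
  have "d + q \<le> d * a 0 0 1 + q * a 0 1 2"
    using l m1 m2 m3 by (simp add: mult.commute)
  then show ?thesis using force_one[OF assms(3) assms(1)] b by blast
qed

lemma SQ_forced:
  assumes "0 < q" "q \<le> 1" "0 < d" "is_SQ_output (Suc 0) 2 2 (lamI q) (pI d) (gq q) c"
  shows "c 0 0 1 = 1 \<and> c 0 1 2 = 1"
proof -
  have sf: "single_feasible 2 2 (lamI q) (gq q) (c 0)" and
    le: "SQ_obj 2 2 (lamI q) (pI d) c 0 (\<lambda>s t. 1) \<le> SQ_obj 2 2 (lamI q) (pI d) c 0 (c 0)"
    using assms(4) sf_iff[OF assms(1,2), of "\<lambda>s t. 1"] unfolding is_SQ_output_def by auto
  have b: "0 \<le> c 0 0 1 \<and> c 0 0 1 \<le> 1 \<and> 0 \<le> c 0 1 2 \<and> c 0 1 2 \<le> 1"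
    using sf unfolding sf_iff[OF assms(1,2)] box_iff by auto
  have "d + q \<le> d * c 0 0 1 + q * c 0 1 2" using le unfolding SQ_obj_eq by simp
  then show ?thesis using force_one[OF assms(3) assms(1)] b by blast
qed

lemma AA_forced:
  assumes "0 < q" "q \<le> 1" "0 < d" "is_AA_output (Suc 0) 2 2 (lamI q) (pI d) (gq q) b"
  shows "b 0 0 1 = 1 \<and> b 0 1 2 = 1"
proof -
  obtain m xs ys where m: "m \<ge> 1" and x0: "xs 0 = (\<lambda>v s t. 0)"
    and it: "\<forall>i\<in>{1..m}.
             in_P (Suc 0) 2 2 (lamI q) (gq q) (ys i) \<and>
             (\<forall>y. in_P (Suc 0) 2 2 (lamI q) (gq q) y \<longrightarrow>
                inner_sol (Suc 0) 2 2 y (grad_f (Suc 0) (lamI q) (pI d) (xs (i - 1)))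
                  \<le> inner_sol (Suc 0) 2 2 (ys i) (grad_f (Suc 0) (lamI q) (pI d) (xs (i - 1)))) \<and>
             xs i = (\<lambda>v s t. xs (i - 1) v s t + ys i v s t / real m)"
    and bx: "b = xs m"
    using assms(4) unfolding is_AA_output_def by blast
  have ys1: "ys i 0 0 1 = 1 \<and> ys i 0 1 2 = 1" if "i \<in> {1..m}" for i
  proof -
    have inp: "in_P (Suc 0) 2 2 (lamI q) (gq q) (ys i)" using it that by blast
    have "inner_sol (Suc 0) 2 2 oneX (grad_f (Suc 0) (lamI q) (pI d) (xs (i - 1)))
                  \<le> inner_sol (Suc 0) 2 2 (ys i) (grad_f (Suc 0) (lamI q) (pI d) (xs (i - 1)))"
      using it that oneX_inP[OF assms(1,2)] by blast
    then have "d + q \<le> d * ys i 0 0 1 + q * ys i 0 1 2" unfolding inner_eq by (simp add: oneX_def)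
    then show ?thesis using force_one[OF assms(3) assms(1)] inP_le[OF assms(1,2) inp] by blast
  qed
  have "i \<le> m \<longrightarrow> xs i 0 0 1 = real i / real m \<and> xs i 0 1 2 = real i / real m" for i
  proof (induction i)
    case 0 then show ?case using x0 by simp
  next
    case (Suc i)
    show ?case
    proof
      assume si: "Suc i \<le> m"
      then have mem: "Suc i \<in> {1..m}" by simp
      then have xe: "xs (Suc i) = (\<lambda>v s t. xs i v s t + ys (Suc i) v s t / real m)" using it by auto
      have "real i / real m + 1 / real m = real (Suc i) / real m" by (simp add: add_divide_distrib)
      then show "xs (Suc i) 0 0 1 = real (Suc i) / real m \<and> xs (Suc i) 0 1 2 = real (Suc i) / real m"
        using Suc.IH si ys1[OF mem] xe by simp
    qed
  qed
  then have "xs m 0 0 1 = 1 \<and> xs m 0 1 2 = 1" using m by simp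
  then show ?thesis using bx by simp
qed

lemma LP_value_eq:
  assumes "0 < q" "q \<le> 1" "0 < d" "d \<le> 1"
  shows "LP_value (Suc 0) 2 2 (lamI q) (pI d) (gq q) = d + q"
  unfolding LP_value_def
proof (rule cSup_eq_maximum)
  show "d + q \<in> LP_obj (Suc 0) 2 2 (lamI q) (pI d) ` {x. in_P (Suc 0) 2 2 (lamI q) (gq q) x}"
  proof
    show "d + q = LP_obj (Suc 0) 2 2 (lamI q) (pI d) oneX" using assms unfolding LP_obj_eq oneX_def by (simp add: min_def)
    show "oneX \<in> {x. in_P (Suc 0) 2 2 (lamI q) (gq q) x}" using oneX_inP[OF assms(1,2)] by simp
  qed
  fix y assume "y \<in> LP_obj (Suc 0) 2 2 (lamI q) (pI d) ` {x. in_P (Suc 0) 2 2 (lamI q) (gq q) x}"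
  then obtain x where inp: "in_P (Suc 0) 2 2 (lamI q) (gq q) x" and y: "y = LP_obj (Suc 0) 2 2 (lamI q) (pI d) x" by auto
  have b: "0 \<le> x 0 0 1 \<and> x 0 0 1 \<le> 1 \<and> 0 \<le> x 0 1 2 \<and> x 0 1 2 \<le> 1" using inP_le[OF assms(1,2) inp] .
  have "x 0 0 1 * d \<le> 1 * d" using b assms by (intro mult_right_mono) auto
  then have "min (x 0 0 1 * d) 1 \<le> d" by simp
  moreover have "q * min (x 0 1 2) 1 \<le> q" using assms by (simp add: mult_left_le)
  ultimately show "y \<le> d + q" unfolding y LP_obj_eq by simp
qed



lemma valid_inst:
  assumes "0 < q" "q \<le> 1" "0 \<le> d" "d \<le> 1"
  shows "valid_instance (Suc 0) 2 2 (lamI q) (pI d) (gq q)"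
proof -
  have e: "{1..2::nat} = {1,2}" by auto
  show ?thesis
    unfolding valid_instance_def all2 e using assms
    by (simp add: lamI_def pI_def lessThan2 pmf_gq)
qed

lemma LP_obj_bound:
  assumes "0 < q" "q \<le> 1" "0 < d" "d \<le> 1" "in_P (Suc 0) 2 2 (lamI q) (gq q) x"
  shows "LP_obj (Suc 0) 2 2 (lamI q) (pI d) x \<le> d + q"
proof -
  have b: "0 \<le> x 0 0 1 \<and> x 0 0 1 \<le> 1 \<and> 0 \<le> x 0 1 2 \<and> x 0 1 2 \<le> 1" using inP_le[OF assms(1,2,5)] .
  have "x 0 0 1 * d \<le> 1 * d" using b assms by (intro mult_right_mono) auto
  then have "min (x 0 0 1 * d) 1 \<le> d" by simp
  moreover have "q * min (x 0 1 2) 1 \<le> q" using assms by (simp add: mult_left_le)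
  ultimately show ?thesis unfolding LP_obj_eq by simp
qed

lemma LP_obj_one: "0 < d \<Longrightarrow> d \<le> 1 \<Longrightarrow> LP_obj (Suc 0) 2 2 (lamI q) (pI d) oneX = d + q"
  unfolding LP_obj_eq oneX_def by (simp add: min_def)

lemma ex_ante_exists:
  assumes "0 < q" "q \<le> 1" "0 < d" "d \<le> 1"
  shows "is_ex_ante (Suc 0) 2 2 (lamI q) (pI d) (gq q) oneX"
proof -
  have inp: "in_P (Suc 0) 2 2 (lamI q) (gq q) oneX" using oneX_inP assms by simp
  have lp: "is_LP_opt (Suc 0) 2 2 (lamI q) (pI d) (gq q) oneX"
    unfolding is_LP_opt_def using inp LP_obj_bound[OF assms] LP_obj_one[OF assms(3,4)] by simp
  have innerle: "inner_sol (Suc 0) 2 2 y (grad_f (Suc 0) (lamI q) (pI d) z) \<le> inner_sol (Suc 0) 2 2 oneX (grad_f (Suc 0) (lamI q) (pI d) z)"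
    if "in_P (Suc 0) 2 2 (lamI q) (gq q) y" for y z
  proof -
    have b: "0 \<le> y 0 0 1 \<and> y 0 0 1 \<le> 1 \<and> 0 \<le> y 0 1 2 \<and> y 0 1 2 \<le> 1" using inP_le[OF assms(1,2) that] .
    have "d * y 0 0 1 \<le> d * 1" "q * y 0 1 2 \<le> q * 1"
      using b assms by (intro mult_left_mono; simp)+
    then show ?thesis unfolding inner_eq oneX_def by simp
  qed
  have aa: "is_AA_output (Suc 0) 2 2 (lamI q) (pI d) (gq q) oneX"
    unfolding is_AA_output_def
    apply (rule exI[of _ 1])
    apply (rule conjI, simp)
    apply (rule exI[of _ "\<lambda>i::nat. if i = 0 then (\<lambda>v s t. 0) else oneX"])
    apply (rule exI[of _ "\<lambda>i::nat. oneX"])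
    using inp innerle by (auto simp: oneX_def fun_eq_iff)
  have sq: "is_SQ_output (Suc 0) 2 2 (lamI q) (pI d) (gq q) oneX"
    unfolding is_SQ_output_def
  proof (intro allI impI conjI)
    fix v assume "v < Suc 0"
    then have v: "v = 0" by simp
    show "single_feasible 2 2 (lamI q) (gq q) (oneX v)"
      unfolding sf_iff[OF assms(1,2)] by (simp add: oneX_def)
    fix y assume "single_feasible 2 2 (lamI q) (gq q) y"
    then have b: "0 \<le> y 0 1 \<and> y 0 1 \<le> 1 \<and> 0 \<le> y 1 2 \<and> y 1 2 \<le> 1"
      unfolding sf_iff[OF assms(1,2)] box_iff by auto
    have "d * y 0 1 \<le> d * 1" "q * y 1 2 \<le> q * 1"
      using b assms by (intro mult_left_mono; simp)+
    then show "SQ_obj 2 2 (lamI q) (pI d) oneX v y \<le> SQ_obj 2 2 (lamI q) (pI d) oneX v (oneX v)"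
      unfolding v SQ_obj_eq by (simp add: oneX_def)
  qed
  show ?thesis unfolding is_ex_ante_def using lp aa sq by blast
qed

theorem proposition3:
  fixes q c :: real
  assumes "0 < q" and "q \<le> 1" and "q < c"
  shows "\<exists>V S T lam p g.
           valid_instance V S T lam p g \<and> has_mdhr g q \<and>
           (\<exists>x. is_ex_ante V S T lam p g x) \<and>
           (\<forall>x. is_ex_ante V S T lam p g x \<longrightarrow>
                policy_reward V S T lam p g x < c * LP_value V S T lam p g)"
proof -
  define d where "d = min 1 (q * (c - q) / 2)"
  have qc: "0 < q * (c - q)" using assms by simp
  have d0: "0 < d" and d1: "d \<le> 1" and d2: "d \<le> q * (c - q) / 2" using qc unfolding d_def by auto
  have ineq: "d + q * q < c * (d + q)"
  proof (cases "c \<ge> 1")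
    case True
    have "d \<le> c * d" using True d0 by simp
    moreover have "q * q < c * q" using assms by simp
    ultimately show ?thesis by (simp add: algebra_simps)
  next
    case False
    have "d * (1 - c) \<le> d" using d0 assms False by (simp add: mult_left_le)
    then have "d * (1 - c) < q * (c - q)" using d2 qc by linarith
    then show ?thesis by (simp add: algebra_simps)
  qed
  show ?thesis
  proof (intro exI conjI allI impI)
    show "valid_instance (Suc 0) 2 2 (lamI q) (pI d) (gq q)" using valid_inst assms d0 d1 by simp
    show "has_mdhr (gq q) q" using mdhr_gq assms by simp
    show "is_ex_ante (Suc 0) 2 2 (lamI q) (pI d) (gq q) oneX" using ex_ante_exists assms d0 d1 by simp
    fix x assume "is_ex_ante (Suc 0) 2 2 (lamI q) (pI d) (gq q) x"
    then obtain a b cc where a: "is_LP_opt (Suc 0) 2 2 (lamI q) (pI d) (gq q) a"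
      and b: "is_AA_output (Suc 0) 2 2 (lamI q) (pI d) (gq q) b"
      and cc: "is_SQ_output (Suc 0) 2 2 (lamI q) (pI d) (gq q) cc"
      and x: "x \<in> {a, b, cc}" unfolding is_ex_ante_def by blast
    have "x 0 0 1 = 1 \<and> x 0 1 2 = 1"
      using x LP_opt_forced[OF assms(1,2) d0 a d1] AA_forced[OF assms(1,2) d0 b] SQ_forced[OF assms(1,2) d0 cc]
      by auto
    then have "policy_reward (Suc 0) 2 2 (lamI q) (pI d) (gq q) x = d + q * q"
      using reward_total assms d0 d1 by simp
    then show "policy_reward (Suc 0) 2 2 (lamI q) (pI d) (gq q) x < c * LP_value (Suc 0) 2 2 (lamI q) (pI d) (gq q)"
      using LP_value_eq[OF assms(1,2) d0 d1] ineq by simp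
  qed
qed


end
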